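(* Let $X$ be a super $X$-set parameter and let $G$ be a graph of order $n$. Then: (1) $X(G)\le\underline{x_0}(G)\le x_0(G)$; (2) if $G$ has only one minimal $X$-set, then $X(G)=\underline{x_0}(G)=x_0(G)$; (3) if $G$ has more than one minimal $X$-set, then $\overline{X}(G)+1\le x_0(G)\le\min\{\overline{X}(G)+X(G),\,n\}$; (4) if $G$ has more than one minimum $X$-set, then $X(G)+1\le\underline{x_0}(G)$.
   Context: All graphs are finite, simple, undirected, with nonempty vertex set. A super $X$-set parameter $X$ assigns to each graph $G$ a family of subsets of $V(G)$, called the $X$-sets of $G$, such that: every graph isomorphism maps $X$-sets to $X$-sets; every graph has at least one $X$-set; and (Superset) if $S$ is an $X$-set of $G$ and $S\subseteq S'\subseteq V(G)$, then $S'$ is an $X$-set of $G$. $X(G)$ is the minimum cardinality of an $X$-set; $\overline{X}(G)$ is the maximum cardinality of a minimal (w.r.t. inclusion) $X$-set. The $X$-TAR graph $\mathfrak{X}(G)$ has as vertices the $X$-sets of $G$, with $S_1S_2$ an edge iff $|S_1\ominus S_2|=1$. $\mathfrak{X}_k(G)$ is the subgraph of $\mathfrak{X}(G)$ induced by the $X$-sets of cardinality at most $k$ (a graph with no vertices is not regarded as connected). $x_0(G)$ is the least $k_0$ such that $\mathfrak{X}_k(G)$ is connected for all $k\ge k_0$, and $\underline{x_0}(G)$ is the least $k$ such that $\mathfrak{X}_k(G)$ is connected. *)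

theory Defs
  imports Main
begin

type_synonym 'a graph = "'a set \<times> 'a set set"

definition verts :: "'a graph \<Rightarrow> 'a set" where "verts G = fst G"
definition edges :: "'a graph \<Rightarrow> 'a set set" where "edges G = snd G"

definition is_graph :: "'a graph \<Rightarrow> bool" where
  "is_graph G \<longleftrightarrow> finite (verts G) \<and> verts G \<noteq> {} \<and>
     (\<forall>e\<in>edges G. \<exists>u v. u \<in> verts G \<and> v \<in> verts G \<and> u \<noteq> v \<and> e = {u, v})"

definition graph_iso :: "('a \<Rightarrow> 'a) \<Rightarrow> 'a graph \<Rightarrow> 'a graph \<Rightarrow> bool" where
  "graph_iso f G H \<longleftrightarrow> bij_betw f (verts G) (verts H) \<and>
     (\<forall>u\<in>verts G. \<forall>v\<in>verts G. {u, v} \<in> edges G \<longleftrightarrow> {f u, f v} \<in> edges H)"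

text \<open>Super X-set parameter: Xp G is the family of X-sets of G.\<close>
definition super_X_param :: "('a graph \<Rightarrow> 'a set set) \<Rightarrow> bool" where
  "super_X_param Xp \<longleftrightarrow>
     (\<forall>G. is_graph G \<longrightarrow> Xp G \<subseteq> Pow (verts G) \<and> Xp G \<noteq> {} \<and>
        (\<forall>S S'. S \<in> Xp G \<and> S \<subseteq> S' \<and> S' \<subseteq> verts G \<longrightarrow> S' \<in> Xp G)) \<and>
     (\<forall>G H f. is_graph G \<and> is_graph H \<and> graph_iso f G H \<longrightarrow>
        (\<forall>S\<in>Xp G. f ` S \<in> Xp H))"

definition Xnum :: "('a graph \<Rightarrow> 'a set set) \<Rightarrow> 'a graph \<Rightarrow> nat" where
  "Xnum Xp G = Min (card ` Xp G)"

definition minimal_Xset :: "('a graph \<Rightarrow> 'a set set) \<Rightarrow> 'a graph \<Rightarrow> 'a set \<Rightarrow> bool" where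
  "minimal_Xset Xp G S \<longleftrightarrow> S \<in> Xp G \<and> (\<forall>T\<in>Xp G. T \<subseteq> S \<longrightarrow> T = S)"

definition minimum_Xset :: "('a graph \<Rightarrow> 'a set set) \<Rightarrow> 'a graph \<Rightarrow> 'a set \<Rightarrow> bool" where
  "minimum_Xset Xp G S \<longleftrightarrow> S \<in> Xp G \<and> card S = Xnum Xp G"

definition Xupper :: "('a graph \<Rightarrow> 'a set set) \<Rightarrow> 'a graph \<Rightarrow> nat" where
  "Xupper Xp G = Max (card ` {S. minimal_Xset Xp G S})"

definition TAR_verts :: "('a graph \<Rightarrow> 'a set set) \<Rightarrow> 'a graph \<Rightarrow> nat \<Rightarrow> 'a set set" where
  "TAR_verts Xp G k = {S \<in> Xp G. card S \<le> k}"

definition TAR_adj :: "('a graph \<Rightarrow> 'a set set) \<Rightarrow> 'a graph \<Rightarrow> nat \<Rightarrow> 'a set \<Rightarrow> 'a set \<Rightarrow> bool" where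
  "TAR_adj Xp G k S1 S2 \<longleftrightarrow> S1 \<in> TAR_verts Xp G k \<and> S2 \<in> TAR_verts Xp G k \<and>
     card ((S1 - S2) \<union> (S2 - S1)) = 1"

definition TAR_connected :: "('a graph \<Rightarrow> 'a set set) \<Rightarrow> 'a graph \<Rightarrow> nat \<Rightarrow> bool" where
  "TAR_connected Xp G k \<longleftrightarrow> TAR_verts Xp G k \<noteq> {} \<and>
     (\<forall>S1\<in>TAR_verts Xp G k. \<forall>S2\<in>TAR_verts Xp G k. (TAR_adj Xp G k)\<^sup>*\<^sup>* S1 S2)"

definition x0 :: "('a graph \<Rightarrow> 'a set set) \<Rightarrow> 'a graph \<Rightarrow> nat" where
  "x0 Xp G = (LEAST k0. \<forall>k\<ge>k0. TAR_connected Xp G k)"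

definition x0_under :: "('a graph \<Rightarrow> 'a set set) \<Rightarrow> 'a graph \<Rightarrow> nat" where
  "x0_under Xp G = (LEAST k. TAR_connected Xp G k)"

end

theory Submission
  imports Defs
begin

lemma sp_sub: "super_X_param Xp \<Longrightarrow> is_graph G \<Longrightarrow> S \<in> Xp G \<Longrightarrow> S \<subseteq> verts G"
  unfolding super_X_param_def by blast

lemma sp_ne: "super_X_param Xp \<Longrightarrow> is_graph G \<Longrightarrow> Xp G \<noteq> {}"
  unfolding super_X_param_def by blast

lemma sp_sup: "super_X_param Xp \<Longrightarrow> is_graph G \<Longrightarrow> S \<in> Xp G \<Longrightarrow> S \<subseteq> S' \<Longrightarrow> S' \<subseteq> verts G \<Longrightarrow> S' \<in> Xp G"
  unfolding super_X_param_def by blast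

lemma fin_V: "is_graph G \<Longrightarrow> finite (verts G)"
  unfolding is_graph_def by blast

lemma fin_X: "super_X_param Xp \<Longrightarrow> is_graph G \<Longrightarrow> finite (Xp G)"
proof -
  assume a: "super_X_param Xp" "is_graph G"
  have "Xp G \<subseteq> Pow (verts G)" using a unfolding super_X_param_def by blast
  moreover have "finite (Pow (verts G))" using fin_V[OF a(2)] by simp
  ultimately show ?thesis by (rule finite_subset)
qed

lemma fin_el: "super_X_param Xp \<Longrightarrow> is_graph G \<Longrightarrow> S \<in> Xp G \<Longrightarrow> finite S"
  by (rule finite_subset[OF sp_sub fin_V])

lemma adj_sym: "TAR_adj Xp G k S T \<Longrightarrow> TAR_adj Xp G k T S"
  unfolding TAR_adj_def by (simp add: Un_commute)

lemma rtranclp_sym_aux: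
  assumes "\<And>x y. R x y \<Longrightarrow> R y x" and "R\<^sup>*\<^sup>* a b" shows "R\<^sup>*\<^sup>* b a"
  using assms(2)
proof (induction rule: rtranclp_induct)
  case base then show ?case by simp
next
  case (step y z)
  then show ?case using assms(1) converse_rtranclp_into_rtranclp by metis
qed

lemma up_path:
  assumes sp: "super_X_param Xp" and ig: "is_graph G" and fD: "finite D"
  shows "A \<in> Xp G \<Longrightarrow> A \<inter> D = {} \<Longrightarrow> D \<subseteq> verts G \<Longrightarrow> card (A \<union> D) \<le> k
     \<Longrightarrow> (TAR_adj Xp G k)\<^sup>*\<^sup>* A (A \<union> D)"
  using fD
proof (induction D rule: finite_induct)
  case empty then show ?case by simp
next
  case (insert x F)
  have AV: "A \<subseteq> verts G" using sp_sub[OF sp ig insert(4)] .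
  have fA: "finite A" by (rule fin_el[OF sp ig insert(4)])
  have c1: "card (A \<union> F) \<le> card (A \<union> insert x F)"
    by (rule card_mono) (use fA insert(1) in auto)
  have IH: "(TAR_adj Xp G k)\<^sup>*\<^sup>* A (A \<union> F)"
    using insert c1 by auto
  have xA: "x \<notin> A" using insert(5) by auto
  have X1: "A \<union> F \<in> Xp G" using sp_sup[OF sp ig insert(4)] insert(6) AV by auto
  have X2: "A \<union> insert x F \<in> Xp G"
    by (rule sp_sup[OF sp ig insert(4)]) (use insert(6) AV in auto)
  have sd: "((A \<union> F) - (A \<union> insert x F)) \<union> ((A \<union> insert x F) - (A \<union> F)) = {x}"
    using xA insert(2) by auto
  have "TAR_adj Xp G k (A \<union> F) (A \<union> insert x F)"
    unfolding TAR_adj_def TAR_verts_def using X1 X2 c1 insert(7) sd by auto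
  then show ?case using IH by (meson rtranclp.rtrancl_into_rtrancl)
qed

lemma sub_path:
  assumes sp: "super_X_param Xp" and ig: "is_graph G"
    and "A \<in> Xp G" "A \<subseteq> B" "B \<subseteq> verts G" "card B \<le> k"
  shows "(TAR_adj Xp G k)\<^sup>*\<^sup>* A B" "(TAR_adj Xp G k)\<^sup>*\<^sup>* B A"
proof -
  have f: "finite (B - A)" by (rule finite_subset[OF _ fin_V[OF ig]]) (use assms in blast)
  have e: "A \<union> (B - A) = B" using assms by auto
  show 1: "(TAR_adj Xp G k)\<^sup>*\<^sup>* A B"
    using up_path[OF sp ig f, of A k] assms e by auto
  show "(TAR_adj Xp G k)\<^sup>*\<^sup>* B A"
    using rtranclp_sym_aux[OF adj_sym 1] by blast
qed

lemma hub_conn: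
  assumes "h \<in> TAR_verts Xp G k" "\<forall>S\<in>TAR_verts Xp G k. (TAR_adj Xp G k)\<^sup>*\<^sup>* S h"
  shows "TAR_connected Xp G k"
  unfolding TAR_connected_def
proof (intro conjI ballI)
  show "TAR_verts Xp G k \<noteq> {}" using assms by blast
next
  fix S1 S2 assume "S1 \<in> TAR_verts Xp G k" "S2 \<in> TAR_verts Xp G k"
  then have "(TAR_adj Xp G k)\<^sup>*\<^sup>* S1 h" "(TAR_adj Xp G k)\<^sup>*\<^sup>* S2 h" using assms by auto
  then show "(TAR_adj Xp G k)\<^sup>*\<^sup>* S1 S2"
  proof -
    have "(TAR_adj Xp G k)\<^sup>*\<^sup>* h S2"
      by (rule rtranclp_sym_aux[of "TAR_adj Xp G k"]) (auto intro: adj_sym simp: \<open>(TAR_adj Xp G k)\<^sup>*\<^sup>* S2 h\<close>)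
    then show ?thesis using \<open>(TAR_adj Xp G k)\<^sup>*\<^sup>* S1 h\<close> by (meson rtranclp_trans)
  qed
qed

lemma isolated_disconn:
  assumes "S \<in> TAR_verts Xp G k" "\<forall>T. \<not> TAR_adj Xp G k S T" "T \<in> TAR_verts Xp G k" "T \<noteq> S"
  shows "\<not> TAR_connected Xp G k"
proof
  assume "TAR_connected Xp G k"
  then have "(TAR_adj Xp G k)\<^sup>*\<^sup>* S T" using assms unfolding TAR_connected_def by blast
  then show False using assms by (metis converse_rtranclpE)
qed

lemma minimal_isolated:
  assumes sp: "super_X_param Xp" and ig: "is_graph G"
    and m: "minimal_Xset Xp G M" and c: "card M = k"
  shows "\<forall>T. \<not> TAR_adj Xp G k M T"
proof (intro allI notI)
  fix T assume a: "TAR_adj Xp G k M T"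
  then have T: "T \<in> Xp G" "card T \<le> k" and s: "card ((M - T) \<union> (T - M)) = 1"
    unfolding TAR_adj_def TAR_verts_def by auto
  obtain x where x: "(M - T) \<union> (T - M) = {x}" using s card_1_singletonE by blast
  have fT: "finite T" by (rule fin_el[OF sp ig T(1)])
  have fM: "finite M" by (rule fin_el[OF sp ig]) (use m in \<open>simp add: minimal_Xset_def\<close>)
  have xin: "x \<in> (M - T) \<union> (T - M)" using x by simp
  have u1: "\<And>y. y \<in> M - T \<Longrightarrow> y = x" using x by (metis UnI1 singletonD)
  have u2: "\<And>y. y \<in> T - M \<Longrightarrow> y = x" using x by (metis UnI2 singletonD)
  show False
  proof (cases "x \<in> M")
    case True
    have xT: "x \<notin> T" using xin True by auto
    have TM: "T \<subseteq> M"
    proof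
      fix y assume "y \<in> T"
      show "y \<in> M"
      proof (rule ccontr)
        assume "y \<notin> M"
        then have "y = x" using u2 \<open>y \<in> T\<close> by auto
        then show False using True \<open>y \<notin> M\<close> by simp
      qed
    qed
    have al: "\<forall>U\<in>Xp G. U \<subseteq> M \<longrightarrow> U = M" using m unfolding minimal_Xset_def by simp
    have "T = M" using mp[OF bspec[OF al T(1)] TM] .
    then show False using xT True by simp
  next
    case False
    have xT: "x \<in> T" using xin False by auto
    have MT: "M \<subseteq> T"
    proof
      fix y assume "y \<in> M"
      show "y \<in> T"
      proof (rule ccontr)
        assume "y \<notin> T"
        then have "y = x" using u1 \<open>y \<in> M\<close> by auto
        then show False using False \<open>y \<in> M\<close> by simp
      qed
    qed
    have "insert x M \<subseteq> T" using MT xT by simp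
    then have "card (insert x M) \<le> card T" by (rule card_mono[OF fT])
    then have "card M + 1 \<le> card T" using False fM by simp
    then show False using c T(2) by simp
  qed
qed

lemma exists_minimal:
  assumes sp: "super_X_param Xp" and ig: "is_graph G" and S: "S \<in> Xp G"
  shows "\<exists>M. M \<subseteq> S \<and> minimal_Xset Xp G M"
proof -
  define F where "F = {T \<in> Xp G. T \<subseteq> S}"
  have fF: "finite F" using fin_X[OF sp ig] unfolding F_def by auto
  have "S \<in> F" using S unfolding F_def by auto
  then have ne: "card ` F \<noteq> {}" by blast
  obtain M where M: "M \<in> F" "card M = Min (card ` F)" using Min_in[OF _ ne] fF by auto
  have fS: "finite S" by (rule fin_el[OF sp ig S])
  have "minimal_Xset Xp G M"
    unfolding minimal_Xset_def
  proof (intro conjI ballI impI)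
    show "M \<in> Xp G" using M unfolding F_def by auto
  next
    fix T assume T: "T \<in> Xp G" "T \<subseteq> M"
    then have "T \<in> F" using M unfolding F_def by auto
    then have "card M \<le> card T" using M fF by auto
    moreover have "finite M" by (rule finite_subset[OF _ fS]) (use M in \<open>simp add: F_def\<close>)
    ultimately show "T = M" using T card_subset_eq by (metis antisym card_mono)
  qed
  then show ?thesis using M unfolding F_def by auto
qed

theorem proposition2p31:
  fixes Xp :: "'a graph \<Rightarrow> 'a set set" and G :: "'a graph" and n :: nat
  assumes "super_X_param Xp" and "is_graph G" and "n = card (verts G)"
  shows "(Xnum Xp G \<le> x0_under Xp G \<and> x0_under Xp G \<le> x0 Xp G)
    \<and> ((\<exists>!S. minimal_Xset Xp G S) \<longrightarrow>
           Xnum Xp G = x0_under Xp G \<and> x0_under Xp G = x0 Xp G)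
    \<and> ((\<exists>S T. minimal_Xset Xp G S \<and> minimal_Xset Xp G T \<and> S \<noteq> T) \<longrightarrow>
           Xupper Xp G + 1 \<le> x0 Xp G \<and> x0 Xp G \<le> min (Xupper Xp G + Xnum Xp G) n)
    \<and> ((\<exists>S T. minimum_Xset Xp G S \<and> minimum_Xset Xp G T \<and> S \<noteq> T) \<longrightarrow>
           Xnum Xp G + 1 \<le> x0_under Xp G)"
proof -
  note sp = assms(1) and ig = assms(2)
  let ?C = "TAR_connected Xp G"
  let ?R = "\<lambda>k. TAR_adj Xp G k"
  have fV: "finite (verts G)" using fin_V[OF ig] .
  have fX: "finite (Xp G)" using fin_X[OF sp ig] .
  obtain S0 where S0: "S0 \<in> Xp G" using sp_ne[OF sp ig] by blast
  have VX: "verts G \<in> Xp G" using sp_sup[OF sp ig S0 sp_sub[OF sp ig S0]] by simp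
  have Cn: "\<forall>k\<ge>n. ?C k"
  proof (intro allI impI)
    fix k assume k: "n \<le> k"
    show "?C k"
    proof (rule hub_conn)
      show "verts G \<in> TAR_verts Xp G k" using VX k assms(3) unfolding TAR_verts_def by auto
      show "\<forall>S\<in>TAR_verts Xp G k. (?R k)\<^sup>*\<^sup>* S (verts G)"
        using sub_path(1)[OF sp ig] sp_sub[OF sp ig] k assms(3)
        unfolding TAR_verts_def by auto
    qed
  qed
  have x0le: "x0 Xp G \<le> n" unfolding x0_def by (rule Least_le) (use Cn in auto)
  have x0C: "\<forall>k\<ge>x0 Xp G. ?C k" unfolding x0_def by (rule LeastI) (use Cn in auto)
  have xu_le: "x0_under Xp G \<le> x0 Xp G" unfolding x0_under_def
    by (rule Least_le) (use x0C in auto)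
  have xuC: "?C (x0_under Xp G)" unfolding x0_under_def by (rule LeastI) (use x0C in auto)
  have Xnum_le: "\<And>k. ?C k \<Longrightarrow> Xnum Xp G \<le> k"
  proof -
    fix k assume "?C k"
    then obtain S where "S \<in> Xp G" "card S \<le> k"
      unfolding TAR_connected_def TAR_verts_def by auto
    then show "Xnum Xp G \<le> k" unfolding Xnum_def using fX
      by (meson Min_le finite_imageI image_eqI order_trans)
  qed
  have Xnum_min: "\<And>S. S \<in> Xp G \<Longrightarrow> Xnum Xp G \<le> card S"
    unfolding Xnum_def using fX by simp
  obtain m where m: "m \<in> Xp G" "card m = Xnum Xp G"
  proof -
    have "Min (card ` Xp G) \<in> card ` Xp G" using Min_in[of "card ` Xp G"] fX S0 by blast
    then show ?thesis using that unfolding Xnum_def by auto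
  qed
  have P1: "Xnum Xp G \<le> x0_under Xp G \<and> x0_under Xp G \<le> x0 Xp G"
    using Xnum_le[OF xuC] xu_le by simp
  have LeastC: "\<And>k. ?C k \<Longrightarrow> x0_under Xp G \<le> k"
    unfolding x0_under_def by (rule Least_le)
  have x0_bound: "\<And>k. (\<forall>j\<ge>k. ?C j) \<Longrightarrow> x0 Xp G \<le> k"
    unfolding x0_def by (rule Least_le)
  have P2: "(\<exists>!S. minimal_Xset Xp G S) \<longrightarrow>
           Xnum Xp G = x0_under Xp G \<and> x0_under Xp G = x0 Xp G"
  proof
    assume "\<exists>!S. minimal_Xset Xp G S"
    then obtain M where M1: "minimal_Xset Xp G M" and M2: "\<forall>S. minimal_Xset Xp G S \<longrightarrow> S = M"
      by (rule ex1E)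
    have M: "minimal_Xset Xp G M" "\<And>S. minimal_Xset Xp G S \<Longrightarrow> S = M"
       apply (rule M1) using M2 by blast
    have MX: "M \<in> Xp G" using M1 unfolding minimal_Xset_def by auto
    have sub: "\<And>S. S \<in> Xp G \<Longrightarrow> M \<subseteq> S"
    proof -
      fix S assume "S \<in> Xp G"
      then obtain A where "A \<subseteq> S" "minimal_Xset Xp G A" using exists_minimal[OF sp ig] by blast
      then show "M \<subseteq> S" using M(2) by blast
    qed
    have fm: "finite m" by (rule fin_el[OF sp ig m(1)])
    have cM: "card M = Xnum Xp G"
      using Xnum_min[OF MX] card_mono[OF fm sub[OF m(1)]] m(2) by simp
    have "\<forall>j\<ge>card M. ?C j"
    proof (intro allI impI)
      fix j assume j: "card M \<le> j"
      show "?C j"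
      proof (rule hub_conn)
        show "M \<in> TAR_verts Xp G j" using MX j unfolding TAR_verts_def by auto
        show "\<forall>S\<in>TAR_verts Xp G j. (?R j)\<^sup>*\<^sup>* S M"
        proof
          fix S assume "S \<in> TAR_verts Xp G j"
          then have "S \<in> Xp G" "card S \<le> j" unfolding TAR_verts_def by auto
          then show "(?R j)\<^sup>*\<^sup>* S M"
            using sub_path(2)[OF sp ig MX sub[of S] sp_sub[OF sp ig, of S]] by blast
        qed
      qed
    qed
    then have "x0 Xp G \<le> card M" by (rule x0_bound)
    then show "Xnum Xp G = x0_under Xp G \<and> x0_under Xp G = x0 Xp G" using P1 cM by simp
  qed
  have P3: "(\<exists>S T. minimal_Xset Xp G S \<and> minimal_Xset Xp G T \<and> S \<noteq> T) \<longrightarrow>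
           Xupper Xp G + 1 \<le> x0 Xp G \<and> x0 Xp G \<le> min (Xupper Xp G + Xnum Xp G) n"
  proof
    assume "\<exists>S T. minimal_Xset Xp G S \<and> minimal_Xset Xp G T \<and> S \<noteq> T"
    then obtain S T where ST: "minimal_Xset Xp G S" "minimal_Xset Xp G T" "S \<noteq> T" by blast
    have fMin: "finite {S. minimal_Xset Xp G S}"
      using fX by (rule rev_finite_subset) (auto simp: minimal_Xset_def)
    have upge: "\<And>S. minimal_Xset Xp G S \<Longrightarrow> card S \<le> Xupper Xp G"
      unfolding Xupper_def using fMin by simp
    obtain M where M: "minimal_Xset Xp G M" "card M = Xupper Xp G"
    proof -
      have "Max (card ` {S. minimal_Xset Xp G S}) \<in> card ` {S. minimal_Xset Xp G S}"
        by (rule Max_in) (use fMin ST(1) in auto)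
      then show ?thesis using that unfolding Xupper_def by auto
    qed
    obtain N where N: "minimal_Xset Xp G N" "N \<noteq> M" using ST by metis
    have ncon: "\<not> ?C (Xupper Xp G)"
    proof (rule isolated_disconn)
      show "M \<in> TAR_verts Xp G (Xupper Xp G)" using M unfolding TAR_verts_def minimal_Xset_def by auto
      show "\<forall>T. \<not> TAR_adj Xp G (Xupper Xp G) M T" by (rule minimal_isolated[OF sp ig M])
      show "N \<in> TAR_verts Xp G (Xupper Xp G)"
        using N upge unfolding TAR_verts_def minimal_Xset_def by auto
      show "N \<noteq> M" by fact
    qed
    have lo: "Xupper Xp G + 1 \<le> x0 Xp G"
    proof (rule ccontr)
      assume "\<not> ?thesis"
      then show False using x0C ncon by auto
    qed
    have "\<forall>j\<ge>Xupper Xp G + Xnum Xp G. ?C j"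
    proof (intro allI impI)
      fix j assume j: "Xupper Xp G + Xnum Xp G \<le> j"
      show "?C j"
      proof (rule hub_conn)
        show "m \<in> TAR_verts Xp G j" using m j unfolding TAR_verts_def by auto
        show "\<forall>S\<in>TAR_verts Xp G j. (?R j)\<^sup>*\<^sup>* S m"
        proof
          fix S assume S: "S \<in> TAR_verts Xp G j"
          then have SX: "S \<in> Xp G" "card S \<le> j" unfolding TAR_verts_def by auto
          obtain A where A: "A \<subseteq> S" "minimal_Xset Xp G A" using exists_minimal[OF sp ig SX(1)] by blast
          have AX: "A \<in> Xp G" using A unfolding minimal_Xset_def by auto
          have AV: "A \<subseteq> verts G" using sp_sub[OF sp ig AX] .
          have mV: "m \<subseteq> verts G" using sp_sub[OF sp ig m(1)] .
          have cA: "card A \<le> Xupper Xp G" using upge A(2) .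
          have cU: "card (A \<union> m) \<le> j" using card_Un_le[of A m] cA m(2) j by simp
          have r1: "(?R j)\<^sup>*\<^sup>* S A" using sub_path(2)[OF sp ig AX A(1) sp_sub[OF sp ig SX(1)] SX(2)] .
          have r2: "(?R j)\<^sup>*\<^sup>* A (A \<union> m)" using sub_path(1)[OF sp ig AX _ _ cU] AV mV by auto
          have r3: "(?R j)\<^sup>*\<^sup>* (A \<union> m) m" using sub_path(2)[OF sp ig m(1) _ _ cU] AV mV by auto
          show "(?R j)\<^sup>*\<^sup>* S m" using r1 r2 r3 by (meson rtranclp_trans)
        qed
      qed
    qed
    then have "x0 Xp G \<le> Xupper Xp G + Xnum Xp G" by (rule x0_bound)
    then show "Xupper Xp G + 1 \<le> x0 Xp G \<and> x0 Xp G \<le> min (Xupper Xp G + Xnum Xp G) n"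
      using lo x0le by simp
  qed
  have P4: "(\<exists>S T. minimum_Xset Xp G S \<and> minimum_Xset Xp G T \<and> S \<noteq> T) \<longrightarrow>
           Xnum Xp G + 1 \<le> x0_under Xp G"
  proof
    assume "\<exists>S T. minimum_Xset Xp G S \<and> minimum_Xset Xp G T \<and> S \<noteq> T"
    then obtain S T where ST: "minimum_Xset Xp G S" "minimum_Xset Xp G T" "S \<noteq> T" by blast
    have SX: "S \<in> Xp G" "card S = Xnum Xp G" "T \<in> Xp G" "card T = Xnum Xp G"
      using ST unfolding minimum_Xset_def by auto
    have fS: "finite S" by (rule fin_el[OF sp ig SX(1)])
    have Smin: "minimal_Xset Xp G S"
      unfolding minimal_Xset_def
    proof (intro conjI ballI impI)
      show "S \<in> Xp G" by fact
      fix U assume "U \<in> Xp G" "U \<subseteq> S"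
      then show "U = S" using Xnum_min SX(2) fS card_subset_eq by (metis antisym card_mono)
    qed
    have ncon: "\<not> ?C (Xnum Xp G)"
    proof (rule isolated_disconn)
      show "S \<in> TAR_verts Xp G (Xnum Xp G)" using SX unfolding TAR_verts_def by auto
      show "\<forall>U. \<not> TAR_adj Xp G (Xnum Xp G) S U" by (rule minimal_isolated[OF sp ig Smin SX(2)])
      show "T \<in> TAR_verts Xp G (Xnum Xp G)" using SX unfolding TAR_verts_def by auto
      show "T \<noteq> S" using ST by auto
    qed
    have "x0_under Xp G \<noteq> Xnum Xp G" using xuC ncon by auto
    then show "Xnum Xp G + 1 \<le> x0_under Xp G" using P1 by simp
  qed
  show ?thesis by (rule conjI[OF P1 conjI[OF P2 conjI[OF P3 P4]]])
qed

end
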